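(* (a) With $q_n=t_n-1$ and $r_n=t_n+\tfrac13$ for $n\ge0$ (i.e. $q_n\in\{-1,0\}$, $r_n\in\{\tfrac13,\tfrac43\}$ according as $t_n=0$ or $1$): $$5\sum_{n\ge1}\frac{q_{n-1}}{n^2}=-3\sum_{n\ge1}\frac{r_n}{n^2}.$$ (b) With $q_n=t_n-1$ and $r_n=t_n+\tfrac97$ for $n\ge0$: $$\sum_{n\ge1}\frac{9q_{n-1}+7r_n}{n^3}=8\zeta(3).$$ (c) With $q_n=t_n-\sqrt2$ and $r_n=t_n+\frac{17\sqrt2-2}{15}$ for $n\ge0$ (i.e. $q_n\in\{-\sqrt2,1-\sqrt2\}$, $r_n\in\{\frac{17\sqrt2-2}{15},\frac{17\sqrt2+13}{15}\}$): $$\sum_{n\ge1}\frac{17q_{n-1}+15r_n}{n^4}=16\,\eta(4).$$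
   Context: For $n\ge 0$, let $t_n\in\{0,1\}$ denote the sum of the binary digits of $n$ reduced modulo $2$ (so $t_0=0$; this is the Thue–Morse sequence). $\zeta(s)=\sum_{n\ge1}n^{-s}$ is the Riemann zeta function and $\eta(s)=\sum_{n\ge1}(-1)^{n-1}n^{-s}$ is the Dirichlet eta function. *)

theory Defs
  imports "HOL-Analysis.Analysis"
begin

fun thue_morse :: "nat \<Rightarrow> nat" where
  "thue_morse n = (if n = 0 then 0 else (n mod 2 + thue_morse (n div 2)) mod 2)"

definition tm :: "nat \<Rightarrow> real" where
  "tm n = real (thue_morse n)"

definition zeta_real :: "real \<Rightarrow> real" where
  "zeta_real s = (\<Sum>n. 1 / (real (Suc n)) powr s)"

definition eta_real :: "real \<Rightarrow> real" where
  "eta_real s = (\<Sum>n. (-1) ^ n / (real (Suc n)) powr s)"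

end

theory Submission imports Defs begin
declare thue_morse.simps[simp del]

lemma th0[simp]: "thue_morse 0 = 0" by (subst thue_morse.simps) simp

lemma thue_lt2: "thue_morse n < 2"
  by (subst thue_morse.simps) auto

lemma tm0: "tm 0 = 0" by (simp add: tm_def)

lemma tm_even: "tm (2*m) = tm m"
proof -
  have "thue_morse (2*m) = thue_morse m"
    using thue_lt2[of m] by (subst thue_morse.simps) auto
  thus ?thesis by (simp add: tm_def)
qed

lemma tm_odd: "tm (2*m+1) = 1 - tm m"
proof -
  have "thue_morse (2*m+1) = 1 - thue_morse m"
    using thue_lt2[of m] by (subst thue_morse.simps) (auto simp: less_2_cases_iff)
  thus ?thesis using thue_lt2[of m] by (auto simp: tm_def less_2_cases_iff)
qed

lemma tm_bounds: "0 \<le> tm n" "tm n \<le> 1"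
  using thue_lt2[of n] by (auto simp: tm_def)

lemma split_eo:
  fixes f :: "nat \<Rightarrow> real"
  assumes "summable f" "summable (\<lambda>m. f(2*m))" "summable (\<lambda>m. f(2*m+1))"
  shows "suminf f = (\<Sum>m. f(2*m)) + (\<Sum>m. f(2*m+1))"
proof -
  have "(\<lambda>n. sum f {n * 2 ..< n * 2 + 2}) sums suminf f"
    using sums_group[OF summable_sums[OF assms(1)], of 2] by simp
  moreover have "\<And>n. sum f {n * 2 ..< n * 2 + 2} = f(2*n) + f(2*n+1)"
    by (simp add: numeral_2_eq_2 mult.commute)
  ultimately have "(\<lambda>n. f(2*n) + f(2*n+1)) sums suminf f" by simp
  moreover have "(\<lambda>n. f(2*n) + f(2*n+1)) sums ((\<Sum>m. f(2*m)) + (\<Sum>m. f(2*m+1)))"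
    using sums_add[OF summable_sums[OF assms(2)] summable_sums[OF assms(3)]] .
  ultimately show ?thesis using sums_unique2 by blast
qed

lemma inv_mono_pow: "0 < j \<Longrightarrow> j \<le> n \<Longrightarrow> 1 / real n ^ k \<le> 1 / real j ^ k"
  by (intro divide_left_mono power_mono) auto

lemma z_summable: "k \<ge> 2 \<Longrightarrow> summable (\<lambda>n. 1 / real n ^ k)"
  using inverse_power_summable[of k, where 'a=real] by (simp add: divide_inverse)

lemma eo_summable:
  fixes f :: "nat \<Rightarrow> real"
  assumes k: "k \<ge> 2" and b: "\<And>n. \<bar>f n\<bar> \<le> 1 / real n ^ k"
  shows "summable f" "summable (\<lambda>m. f(2*m))" "summable (\<lambda>m. f(2*m+1))"
proof -
  have zs: "summable (\<lambda>n. 1 / real (Suc n) ^ k)"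
    using z_summable[OF k] summable_Suc_iff[where f="\<lambda>n. 1 / real n ^ k"] by simp
  show "summable f"
    by (rule summable_comparison_test'[OF z_summable[OF k], of 0]) (use b in auto)
  show "summable (\<lambda>m. f(2*m))"
  proof (rule summable_comparison_test'[OF zs, of 1])
    fix m :: nat assume "m \<ge> 1"
    have "\<bar>f (2*m)\<bar> \<le> 1 / real (2*m) ^ k" by (rule b)
    also have "\<dots> \<le> 1 / real (Suc m) ^ k" using \<open>m\<ge>1\<close> by (intro inv_mono_pow) auto
    finally show "norm (f (2*m)) \<le> 1 / real (Suc m) ^ k" by simp
  qed
  show "summable (\<lambda>m. f(2*m+1))"
  proof (rule summable_comparison_test'[OF zs, of 0])
    fix m :: nat
    have "\<bar>f (2*m+1)\<bar> \<le> 1 / real (2*m+1) ^ k" by (rule b)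
    also have "\<dots> \<le> 1 / real (Suc m) ^ k" by (intro inv_mono_pow) auto
    finally show "norm (f (2*m+1)) \<le> 1 / real (Suc m) ^ k" by simp
  qed
qed

lemma alg1:
  fixes A B Z c :: real
  assumes "c > 0" "A + B = (Z - A)/c + B/c + Z - Z/c"
  shows "(c+1)*A + (c-1)*B = c*Z"
proof -
  have "c*(A+B) = c*((Z - A)/c + B/c + Z - Z/c)" using assms(2) by simp
  also have "\<dots> = Z - A + B + c*Z - Z" using assms(1) by (simp add: field_simps)
  finally show ?thesis by (simp add: algebra_simps)
qed

lemma alg2:
  fixes E W Z c :: real
  assumes "c > 0" "E = - (Z/c) + W" "Z = Z/c + W"
  shows "E = (1 - 2/c) * Z"
proof -
  have "E = Z - 2 * (Z/c)" using assms(2,3) by linarith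
  then show ?thesis by (simp add: algebra_simps)
qed

lemma main:
  fixes k :: nat
  assumes k: "k \<ge> 2"
  defines "z \<equiv> \<lambda>n. 1 / real n ^ k"
  defines "a \<equiv> \<lambda>n. tm (n - 1) / real n ^ k"
  defines "b \<equiv> \<lambda>n. tm n / real n ^ k"
  defines "e \<equiv> \<lambda>n. - ((-1) ^ n / real n ^ k)"
  shows "(2^k+1) * suminf a + (2^k-1) * suminf b = 2^k * suminf z"
    "suminf e = (1 - 2 / 2^k) * suminf z"
    "summable a" "summable b" "summable z" "summable e"
proof -
  have zb: "\<bar>z n\<bar> \<le> z n" for n by (simp add: z_def)
  have ab: "\<bar>a n\<bar> \<le> z n" for n
    using tm_bounds[of "n-1"] by (auto simp: a_def z_def divide_right_mono)
  have bb: "\<bar>b n\<bar> \<le> z n" for n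
    using tm_bounds[of "n"] by (auto simp: b_def z_def divide_right_mono)
  have eb: "\<bar>e n\<bar> \<le> z n" for n
    by (simp add: e_def z_def abs_divide power_abs)
  have Z: "summable z" "summable (\<lambda>m. z (2*m))" "summable (\<lambda>m. z (2*m+1))"
    using eo_summable[OF k zb[unfolded z_def]] by (simp_all add: z_def)
  have A: "summable a" "summable (\<lambda>m. a (2*m))" "summable (\<lambda>m. a (2*m+1))"
    using eo_summable[OF k ab[unfolded z_def]] by (simp_all add: z_def)
  have B: "summable b" "summable (\<lambda>m. b (2*m))" "summable (\<lambda>m. b (2*m+1))"
    using eo_summable[OF k bb[unfolded z_def]] by (simp_all add: z_def)
  have E: "summable e" "summable (\<lambda>m. e (2*m))" "summable (\<lambda>m. e (2*m+1))"
    using eo_summable[OF k eb[unfolded z_def]] by (simp_all add: z_def)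

  show "summable a" "summable b" "summable z" "summable e" using A B Z E by auto
  have p2: "(2::real)^k > 0" by simp
  have z2: "z (2*m) = z m / 2^k" for m by (simp add: z_def power_mult_distrib)
  have b2: "b (2*m) = b m / 2^k" for m by (simp add: b_def tm_even power_mult_distrib)
  have a2: "a (2*m) = (z m - a m) / 2^k" for m
  proof (cases m)
    case 0 then show ?thesis using k by (simp add: a_def z_def tm0)
  next
    case (Suc j)
    have "2 * m - 1 = 2*j+1" using Suc by simp
    have t: "tm (2*j+1) = 1 - tm j" by (rule tm_odd)
    have r: "real (2*m) = 2 * real (Suc j)" using Suc by simp
    have "a (2*m) = (1 - tm j) / (2 * real (Suc j)) ^ k"
      unfolding a_def using \<open>2 * m - 1 = 2*j+1\<close> t r by simp
    also have "\<dots> = (1 - tm j) / (2^k * real (Suc j) ^ k)"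
      by (simp only: power_mult_distrib)
    also have "\<dots> = (1 / real (Suc j) ^ k - tm j / real (Suc j) ^ k) / 2^k"
      by (simp only: diff_divide_distrib divide_divide_eq_left mult.commute)
    also have "\<dots> = (z m - a m) / 2^k" using Suc
      by (simp add: a_def z_def)
    finally show ?thesis .
  qed
  have ab1: "a (2*m+1) + b (2*m+1) = z (2*m+1)" for m
    using tm_odd[of m] by (simp add: a_def b_def z_def tm_even add_divide_distrib[symmetric])
  have e2: "e (2*m) = - (z m / 2^k)" for m by (simp add: e_def z_def power_mult_distrib)
  have e1: "e (2*m+1) = z (2*m+1)" for m by (simp add: e_def z_def)
  have fz: "(\<lambda>m. z(2*m)) = (\<lambda>m. z m / 2^k)" by (rule ext) (rule z2)
  have fa: "(\<lambda>m. a(2*m)) = (\<lambda>m. (z m - a m) / 2^k)" by (rule ext) (rule a2)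
  have fb: "(\<lambda>m. b(2*m)) = (\<lambda>m. b m / 2^k)" by (rule ext) (rule b2)
  have fe: "(\<lambda>m. e(2*m)) = (\<lambda>m. - (z m / 2^k))" by (rule ext) (rule e2)
  have fe1: "(\<lambda>m. e(2*m+1)) = (\<lambda>m. z(2*m+1))" by (rule ext) (rule e1)
  have SZ: "suminf z = suminf z / 2^k + (\<Sum>m. z(2*m+1))"
    using split_eo[OF Z] unfolding fz suminf_divide[OF Z(1)] .
  have "(\<Sum>m. (z m - a m) / 2^k) = (suminf z - suminf a) / 2^k"
    unfolding suminf_divide[OF summable_diff[OF Z(1) A(1)]] suminf_diff[OF Z(1) A(1)] ..
  then have SA: "suminf a = (suminf z - suminf a) / 2^k + (\<Sum>m. a(2*m+1))"
    using split_eo[OF A] unfolding fa by simp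
  have SB: "suminf b = suminf b / 2^k + (\<Sum>m. b(2*m+1))"
    using split_eo[OF B] unfolding fb suminf_divide[OF B(1)] .
  have SAB: "(\<Sum>m. a(2*m+1)) + (\<Sum>m. b(2*m+1)) = (\<Sum>m. z(2*m+1))"
    unfolding suminf_add[OF A(3) B(3)] ab1 ..
  have "(\<Sum>m. - (z m / 2^k)) = - (suminf z / 2^k)"
    unfolding suminf_minus[OF summable_divide[OF Z(1)]] suminf_divide[OF Z(1)] ..
  then have SE: "suminf e = - (suminf z / 2^k) + (\<Sum>m. z(2*m+1))"
    using split_eo[OF E] unfolding fe fe1 by simp
  have "suminf a + suminf b = (suminf z - suminf a) / 2^k + suminf b / 2^k + suminf z - suminf z / 2^k"
    using SA SB SAB SZ by linarith
  then show "(2^k+1) * suminf a + (2^k-1) * suminf b = 2^k * suminf z"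
    by (rule alg1[OF p2])
  show "suminf e = (1 - 2 / 2^k) * suminf z"
    by (rule alg2[OF p2 SE SZ])
qed

lemma shifted:
  fixes k :: nat
  assumes k: "k \<ge> 2"
  defines "P \<equiv> \<lambda>n. tm n / real (Suc n) ^ k"
  defines "Q \<equiv> \<lambda>n. tm (Suc n) / real (Suc n) ^ k"
  defines "R \<equiv> \<lambda>n. 1 / real (Suc n) ^ k"
  shows "P sums suminf P" "Q sums suminf Q" "R sums suminf R"
    "(2^k+1) * suminf P + (2^k-1) * suminf Q = 2^k * suminf R"
    "(\<Sum>n. (-1) ^ n / real (Suc n) ^ k) = (1 - 2 / 2^k) * suminf R"
proof -
  note M = main[OF k]
  let ?z = "\<lambda>n. 1 / real n ^ k" and ?a = "\<lambda>n. tm (n - 1) / real n ^ k"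
    and ?b = "\<lambda>n. tm n / real n ^ k" and ?e = "\<lambda>n. - ((-1) ^ n / real n ^ k)"
  have k0: "k \<noteq> 0" using k by simp
  have hz: "suminf R = suminf ?z"
    using suminf_split_head[OF M(5)] k0 by (simp add: R_def)
  have ha: "suminf P = suminf ?a"
    using suminf_split_head[OF M(3)] k0 by (simp add: P_def)
  have hb: "suminf Q = suminf ?b"
    using suminf_split_head[OF M(4)] k0 by (simp add: Q_def tm0)
  have he: "(\<Sum>n. (-1) ^ n / real (Suc n) ^ k) = suminf ?e"
    using suminf_split_head[OF M(6)] k0 by simp
  have "summable R" using M(5) summable_Suc_iff[where f="?z"] by (simp add: R_def)
  then show "R sums suminf R" by (simp add: summable_sums)
  have "summable P" using M(3) summable_Suc_iff[where f="?a"] by (simp add: P_def)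
  then show "P sums suminf P" by (simp add: summable_sums)
  have "summable Q" using M(4) summable_Suc_iff[where f="?b"] by (simp add: Q_def)
  then show "Q sums suminf Q" by (simp add: summable_sums)
  show "(2^k+1) * suminf P + (2^k-1) * suminf Q = 2^k * suminf R"
    using M(1) ha hb hz by simp
  show "(\<Sum>n. (-1) ^ n / real (Suc n) ^ k) = (1 - 2 / 2^k) * suminf R"
    using M(2) he hz by simp
qed

theorem proposition5:
  shows "(5 * (\<Sum>n. (tm n - 1) / real (Suc n) ^ 2)
            = -3 * (\<Sum>n. (tm (Suc n) + 1/3) / real (Suc n) ^ 2))
       \<and> ((\<Sum>n. (9 * (tm n - 1) + 7 * (tm (Suc n) + 9/7)) / real (Suc n) ^ 3)
            = 8 * zeta_real 3)
       \<and> ((\<Sum>n. (17 * (tm n - sqrt 2) + 15 * (tm (Suc n) + (17 * sqrt 2 - 2) / 15))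
                  / real (Suc n) ^ 4)
            = 16 * eta_real 4)"
proof (intro conjI)
  have k2: "(2::nat) \<le> 2" and k3: "(2::nat) \<le> 3" and k4: "(2::nat) \<le> 4" by simp_all
  note S2 = shifted[OF k2] and S3 = shifted[OF k3] and S4 = shifted[OF k4]
  let ?P = "\<lambda>k. (\<Sum>n. tm n / real (Suc n) ^ k)"
  let ?Q = "\<lambda>k. (\<Sum>n. tm (Suc n) / real (Suc n) ^ k)"
  let ?R = "\<lambda>k. (\<Sum>n. 1 / real (Suc n) ^ k)"
  have e1: "(\<lambda>n. (tm n - 1) / real (Suc n) ^ 2) = (\<lambda>n. tm n / real (Suc n) ^ 2 - 1 / real (Suc n) ^ 2)"
    by (rule ext) (simp only: diff_divide_distrib)
  have a1: "(\<lambda>n. (tm n - 1) / real (Suc n) ^ 2) sums (?P 2 - ?R 2)"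
    unfolding e1 by (rule sums_diff[OF S2(1) S2(3)])
  have e2: "(\<lambda>n. (tm (Suc n) + 1/3) / real (Suc n) ^ 2) = (\<lambda>n. tm (Suc n) / real (Suc n) ^ 2 + 1 / real (Suc n) ^ 2 / 3)"
    by (rule ext) (simp only: add_divide_distrib divide_divide_eq_left mult.commute)
  have a2: "(\<lambda>n. (tm (Suc n) + 1/3) / real (Suc n) ^ 2) sums (?Q 2 + ?R 2 / 3)"
    unfolding e2 by (rule sums_add[OF S2(2) sums_divide[OF S2(3)]])
  have "(2::real)^2 = 4" by simp
  then have r2: "5 * ?P 2 + 3 * ?Q 2 = 4 * ?R 2" using S2(4) by simp
  show "5 * (\<Sum>n. (tm n - 1) / real (Suc n) ^ 2)
            = -3 * (\<Sum>n. (tm (Suc n) + 1/3) / real (Suc n) ^ 2)"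
    unfolding sums_unique[OF a1, symmetric] sums_unique[OF a2, symmetric] using r2 by (simp add: right_diff_distrib distrib_left)
  have e3: "(\<lambda>n. (9 * (tm n - 1) + 7 * (tm (Suc n) + 9/7)) / real (Suc n) ^ 3) = (\<lambda>n. 9 * (tm n / real (Suc n) ^ 3) + 7 * (tm (Suc n) / real (Suc n) ^ 3))"
  proof (rule ext)
    fix n
    have "9 * (tm n - 1) + 7 * (tm (Suc n) + 9/7) = 9 * tm n + 7 * tm (Suc n)" by simp
    then show "(9 * (tm n - 1) + 7 * (tm (Suc n) + 9/7)) / real (Suc n) ^ 3 = 9 * (tm n / real (Suc n) ^ 3) + 7 * (tm (Suc n) / real (Suc n) ^ 3)"
      by (simp only: add_divide_distrib times_divide_eq_right)
  qed
  have b1: "(\<lambda>n. (9 * (tm n - 1) + 7 * (tm (Suc n) + 9/7)) / real (Suc n) ^ 3) sums (9 * ?P 3 + 7 * ?Q 3)"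
    unfolding e3 by (rule sums_add[OF sums_mult[OF S3(1)] sums_mult[OF S3(2)]])
  have z3: "zeta_real 3 = ?R 3"
    unfolding zeta_real_def by (simp add: powr_realpow)
  have "(2::real)^3 = 8" by simp
  then have r3: "9 * ?P 3 + 7 * ?Q 3 = 8 * ?R 3" using S3(4) by simp
  show "(\<Sum>n. (9 * (tm n - 1) + 7 * (tm (Suc n) + 9/7)) / real (Suc n) ^ 3) = 8 * zeta_real 3"
    unfolding sums_unique[OF b1, symmetric] z3 by (rule r3)
  have e4: "(\<lambda>n. (17 * (tm n - sqrt 2) + 15 * (tm (Suc n) + (17 * sqrt 2 - 2) / 15)) / real (Suc n) ^ 4)
     = (\<lambda>n. 17 * (tm n / real (Suc n) ^ 4) + 15 * (tm (Suc n) / real (Suc n) ^ 4) - 2 * (1 / real (Suc n) ^ 4))"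
  proof (rule ext)
    fix n
    have "17 * (tm n - sqrt 2) + 15 * (tm (Suc n) + (17 * sqrt 2 - 2) / 15) = 17 * tm n + 15 * tm (Suc n) - 2 * 1"
      by (simp add: field_simps)
    then show "(17 * (tm n - sqrt 2) + 15 * (tm (Suc n) + (17 * sqrt 2 - 2) / 15)) / real (Suc n) ^ 4 =
      17 * (tm n / real (Suc n) ^ 4) + 15 * (tm (Suc n) / real (Suc n) ^ 4) - 2 * (1 / real (Suc n) ^ 4)"
      by (simp only: add_divide_distrib diff_divide_distrib times_divide_eq_right)
  qed
  have c1: "(\<lambda>n. (17 * (tm n - sqrt 2) + 15 * (tm (Suc n) + (17 * sqrt 2 - 2) / 15)) / real (Suc n) ^ 4)
     sums (17 * ?P 4 + 15 * ?Q 4 - 2 * ?R 4)"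
    unfolding e4 by (rule sums_diff[OF sums_add[OF sums_mult[OF S4(1)] sums_mult[OF S4(2)]] sums_mult[OF S4(3)]])
  have "(2::real)^4 = 16" by simp
  then have r4: "17 * ?P 4 + 15 * ?Q 4 = 16 * ?R 4" and q4: "(\<Sum>n. (-1) ^ n / real (Suc n) ^ 4) = 7/8 * ?R 4"
    using S4(4) S4(5) by simp_all
  have et: "eta_real 4 = 7/8 * ?R 4"
    unfolding eta_real_def using q4 by (simp add: powr_realpow)
  show "(\<Sum>n. (17 * (tm n - sqrt 2) + 15 * (tm (Suc n) + (17 * sqrt 2 - 2) / 15)) / real (Suc n) ^ 4)
            = 16 * eta_real 4"
    unfolding sums_unique[OF c1, symmetric] et using r4 by linarith
qed

end
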